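(* Let $V=(\mathbb{F}_2)^r$, $W=(\mathbb{F}_2)^s$ with $s>r$, let $\alpha:V\to W$ be injective, and let $\sigma\in\mathrm{Sym}(V)$ be linearly extendible via $\alpha$. Let $T=\langle\alpha(V)\rangle$ and let $\sigma':W\to W$ be defined as follows: for $t\in T$ written as $t=\sum_{j=1}^{\iota}\alpha(v^j)$ with $v^j\in V$, set $\sigma'(t)=\sum_{j=1}^{\iota}\alpha(\sigma(v^j))$; fix a subset $B$ of the standard basis $\{\mathbf e_1,\dots,\mathbf e_s\}$ of $W$ with $|B|=s-\dim T$ and $W=T\oplus\langle B\rangle$, and for $w=w_T+w_B$ with $w_T\in T$, $w_B\in\langle B\rangle$ set $\sigma'(w)=\sigma'(w_T)+w_B$. Then $\sigma'$ is well defined and $\sigma'\in\mathrm{GL}(W)$.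
   Context: For $\sigma\in\mathrm{Sym}(V)$ and injective $\alpha:V\to W$, $\sigma$ is called linearly extendible via $\alpha$ if for every finite family $\{v^i\}_{i\in I}\subset V$ one has $\sum_{i\in I}\alpha(v^i)=0\iff\sum_{i\in I}\alpha(\sigma(v^i))=0$. *)

theory Defs
  imports "HOL-Analysis.Analysis" "HOL-Library.Z2"
begin

text \<open>sigma is linearly extendible via alpha: for every finite family (v i) indexed by i in I,
  the sum of alpha (v i) vanishes iff the sum of alpha (sigma (v i)) vanishes.\<close>
definition linearly_extendible ::
  "('v \<Rightarrow> 'v) \<Rightarrow> ('v \<Rightarrow> 'w::comm_monoid_add) \<Rightarrow> bool" where
  "linearly_extendible \<sigma> \<alpha> \<longleftrightarrow>
     (\<forall>(I::nat set) (v::nat \<Rightarrow> 'v). finite I \<longrightarrow>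
        ((\<Sum>i\<in>I. \<alpha> (v i)) = 0 \<longleftrightarrow> (\<Sum>i\<in>I. \<alpha> (\<sigma> (v i))) = 0))"

end

theory Submission imports Defs begin
lemma bit_add_self: "(b::bit) + b = 0"
  by (cases "b = 0") (auto simp: one_add_one[symmetric])
lemma vadd_self: "(x::bit^'n) + x = 0"
  by (simp add: vec_eq_iff bit_add_self)
lemma vadd_eq0: "(x::bit^'n) + y = 0 \<longleftrightarrow> x = y"
  by (metis add.assoc add_0 vadd_self add.right_neutral)
lemma bit_cases2: "(c::bit) = 0 \<or> c = 1" by auto

lemma span_rep:
  assumes "t \<in> vec.span (range (\<alpha>::'a \<Rightarrow> bit^'n))"
  shows "\<exists>(n::nat) v. t = (\<Sum>i<n. \<alpha> (v i))"
  using assms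
proof (induct rule: vec.span_induct_alt)
  case base
  have "0 = (\<Sum>i<(0::nat). \<alpha> (undefined i))" by simp
  then show ?case by blast
next
  case (step c x y)
  then obtain n :: nat and v where y: "y = (\<Sum>i<n. \<alpha> (v i))" by blast
  from step obtain a where x: "x = \<alpha> a" by auto
  show ?case
  proof (cases "c = 0")
    case True then show ?thesis using y by auto
  next
    case False
    then have c: "c = 1" by auto
    have "c *s x + y = (\<Sum>i<Suc n. \<alpha> ((v(n := a)) i))"
      using y x c by (simp add: add.commute)
    then show ?thesis by blast
  qed
qed

lemma sum_in_span: "(\<Sum>i\<in>I. \<alpha> (v i)) \<in> vec.span (range (\<alpha>::'a \<Rightarrow> bit^'n))"
  by (intro vec.span_sum vec.span_base) auto

lemma concat_fam:
  fixes f :: "'a \<Rightarrow> 'b::comm_monoid_add" and g :: "'a \<Rightarrow> 'b" and I J :: "nat set"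
  assumes "finite I" "finite J"
  shows "\<exists>(K::nat set) w. finite K \<and> (\<Sum>k\<in>K. f (w k)) = (\<Sum>i\<in>I. f (v i)) + (\<Sum>j\<in>J. f (u j))
          \<and> (\<Sum>k\<in>K. g (w k)) = (\<Sum>i\<in>I. g (v i)) + (\<Sum>j\<in>J. g (u j))"
proof -
  define K where "K = (\<lambda>i. 2*i) ` I \<union> (\<lambda>j. Suc (2*j)) ` J"
  define w where "w k = (if even k then v (k div 2) else u (k div 2))" for k
  have disj: "(\<lambda>i. 2*i) ` I \<inter> (\<lambda>j. Suc (2*j)) ` J = {}" proof (rule equals0I)
    fix k assume "k \<in> (\<lambda>i. 2*i) ` I \<inter> (\<lambda>j. Suc (2*j)) ` J"
    then obtain i j where "k = 2*i" "k = Suc (2*j)" by blast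
    then show False by presburger
  qed
  have inj1: "inj_on (\<lambda>i::nat. 2*i) I" by (auto simp: inj_on_def)
  have inj2: "inj_on (\<lambda>j::nat. Suc (2*j)) J" by (auto simp: inj_on_def)
  have S: "(\<Sum>k\<in>K. h (w k)) = (\<Sum>i\<in>I. h (v i)) + (\<Sum>j\<in>J. h (u j))" for h :: "_ \<Rightarrow> 'b"
  proof -
    have "(\<Sum>k\<in>K. h (w k)) = (\<Sum>k\<in>(\<lambda>i. 2*i) ` I. h (w k)) + (\<Sum>k\<in>(\<lambda>j. Suc (2*j)) ` J. h (w k))"
      unfolding K_def by (rule sum.union_disjoint) (use assms disj in auto)
    also have "(\<Sum>k\<in>(\<lambda>i. 2*i) ` I. h (w k)) = (\<Sum>i\<in>I. h (v i))"
      by (simp add: sum.reindex[OF inj1] w_def)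
    also have "(\<Sum>k\<in>(\<lambda>j. Suc (2*j)) ` J. h (w k)) = (\<Sum>j\<in>J. h (u j))"
      by (simp add: sum.reindex[OF inj2] w_def)
    finally show ?thesis .
  qed
  have fK: "finite K" using assms unfolding K_def by auto
  show ?thesis
    apply (rule exI[of _ K], rule exI[of _ w])
    apply (intro conjI)
      apply (rule fK)
     apply (rule S)
    apply (rule S)
    done
qed
theorem mainTheorem2:
  fixes \<alpha> :: "bit ^ 'r \<Rightarrow> bit ^ 's"
    and \<sigma> :: "bit ^ 'r \<Rightarrow> bit ^ 'r"
    and T :: "(bit ^ 's) set"
    and B :: "(bit ^ 's) set"
  assumes "CARD('s) > CARD('r)"
    and "inj \<alpha>"
    and "bij \<sigma>"
    and "linearly_extendible \<sigma> \<alpha>"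
    and T_def: "T = vec.span (range \<alpha>)"
    and "B \<subseteq> cart_basis"
    and "card B = CARD('s) - vec.dim T"
    and "vec.span (T \<union> B) = UNIV"
    and "T \<inter> vec.span B = {0}"
  shows "\<exists>\<sigma>'. ((\<forall>(I::nat set) (v::nat \<Rightarrow> bit ^ 'r). finite I \<longrightarrow>
                 \<sigma>' (\<Sum>j\<in>I. \<alpha> (v j)) = (\<Sum>j\<in>I. \<alpha> (\<sigma> (v j))))
              \<and> (\<forall>t\<in>T. \<forall>b\<in>vec.span B. \<sigma>' (t + b) = \<sigma>' t + b))
           \<and> (\<forall>g. ((\<forall>(I::nat set) (v::nat \<Rightarrow> bit ^ 'r). finite I \<longrightarrow>
                      g (\<Sum>j\<in>I. \<alpha> (v j)) = (\<Sum>j\<in>I. \<alpha> (\<sigma> (v j))))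
                   \<and> (\<forall>t\<in>T. \<forall>b\<in>vec.span B. g (t + b) = g t + b)) \<longrightarrow> g = \<sigma>')
           \<and> Vector_Spaces.linear (*s) (*s) \<sigma>' \<and> bij \<sigma>'"
proof -
  note LE = assms(4)[unfolded linearly_extendible_def]
  define F where "F I v = (\<Sum>i\<in>I. \<alpha> (v i))" for I :: "nat set" and v
  define G where "G I v = (\<Sum>i\<in>I. \<alpha> (\<sigma> (v i)))" for I :: "nat set" and v
  have FT: "F I v \<in> T" for I v unfolding F_def T_def by (rule sum_in_span)
  have GT: "G I v \<in> T" for I v unfolding G_def T_def by (rule sum_in_span)
  have conc: "\<exists>K w. finite K \<and> F K w = F I v + F J u \<and> G K w = G I v + G J u"
    if "finite I" "finite J" for I J v u
    using concat_fam[OF that, of \<alpha> _ _ "\<lambda>x. \<alpha> (\<sigma> x)"] unfolding F_def G_def by blast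
  have wd: "G I v = G J u" if wdA: "finite I" "finite J" "F I v = F J u" for I J v u
  proof -
    obtain K w where K: "finite K" "F K w = F I v + F J u" "G K w = G I v + G J u"
      using conc[OF wdA(1,2)] by blast
    have "F K w = 0" by (simp only: K(2) wdA(3) vadd_self)
    then have "G K w = 0" using LE K(1) unfolding F_def G_def by blast
    then show ?thesis using K(3) vadd_eq0 by metis
  qed
  have Tsp: "vec.span T = T" unfolding T_def by (rule vec.span_span)
  have rep: "\<exists>n::nat. \<exists>v. t = F {..<n} v" if "t \<in> T" for t
    using span_rep[of t \<alpha>] that unfolding T_def F_def by blast
  have decomp: "\<exists>t\<in>T. \<exists>b\<in>vec.span B. w = t + b" for w
  proof -
    have "w \<in> vec.span (T \<union> B)" using assms(8) by auto
    then show ?thesis unfolding vec.span_Un Tsp by blast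
  qed
  have uniq: "t = t' \<and> b = b'" if "t \<in> T" "t' \<in> T" "b \<in> vec.span B" "b' \<in> vec.span B"
    "t + b = t' + b'" for t t' b b'
  proof -
    have "(t + b) + (t' + b') = 0" using that(5) by (simp only: vadd_eq0)
    then have "(t + t') + (b + b') = 0" by (simp add: ac_simps)
    then have e: "t + t' = b + b'" using vadd_eq0 by metis
    have "t + t' \<in> T" using that(1,2) Tsp vec.span_add by metis
    moreover have "b + b' \<in> vec.span B" using that(3,4) vec.span_add by blast
    ultimately have "t + t' = 0" "b + b' = 0" using e assms(9) by auto
    then show ?thesis using vadd_eq0 by metis
  qed
  define \<sigma>T where "\<sigma>T t = (SOME y. \<exists>I v. finite I \<and> t = F I v \<and> y = G I v)" for t
  have \<sigma>T_eq: "\<sigma>T (F I v) = G I v" if "finite I" for I v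
  proof -
    have "\<exists>y. \<exists>J u. finite J \<and> F I v = F J u \<and> y = G J u" using that by blast
    from someI_ex[OF this] obtain J u where "finite J" "F I v = F J u" "\<sigma>T (F I v) = G J u"
      unfolding \<sigma>T_def by blast
    then show ?thesis using wd[OF that] by metis
  qed
  define \<sigma>' where "\<sigma>' w = (SOME y. \<exists>t\<in>T. \<exists>b\<in>vec.span B. w = t + b \<and> y = \<sigma>T t + b)" for w
  have \<sigma>'_eq: "\<sigma>' (t + b) = \<sigma>T t + b" if "t \<in> T" "b \<in> vec.span B" for t b
  proof -
    have "\<exists>y. \<exists>t'\<in>T. \<exists>b'\<in>vec.span B. t + b = t' + b' \<and> y = \<sigma>T t' + b'" using that by blast
    from someI_ex[OF this] obtain t' b' where "t' \<in> T" "b' \<in> vec.span B" "t + b = t' + b'"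
      "\<sigma>' (t + b) = \<sigma>T t' + b'" unfolding \<sigma>'_def by blast
    then show ?thesis using uniq[OF that(1) _ that(2)] by metis
  qed
  have B0: "0 \<in> vec.span B" by (rule vec.span_zero)
  have \<sigma>'F: "\<sigma>' (F I v) = G I v" if "finite I" for I v
    using \<sigma>'_eq[OF FT B0, of I v] \<sigma>T_eq[OF that] by simp
  have \<sigma>'T: "\<sigma>' t = \<sigma>T t" if "t \<in> T" for t
    using \<sigma>'_eq[OF that B0] by simp
  have P1: "\<forall>(I::nat set) (v::nat \<Rightarrow> bit ^ 'r). finite I \<longrightarrow>
                 \<sigma>' (\<Sum>j\<in>I. \<alpha> (v j)) = (\<Sum>j\<in>I. \<alpha> (\<sigma> (v j)))"
    using \<sigma>'F unfolding F_def G_def by blast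
  have P2: "\<forall>t\<in>T. \<forall>b\<in>vec.span B. \<sigma>' (t + b) = \<sigma>' t + b"
    using \<sigma>'_eq \<sigma>'T by simp
  have P3: "g = \<sigma>'" if "\<forall>(I::nat set) (v::nat \<Rightarrow> bit ^ 'r). finite I \<longrightarrow>
                      g (\<Sum>j\<in>I. \<alpha> (v j)) = (\<Sum>j\<in>I. \<alpha> (\<sigma> (v j)))"
       "\<forall>t\<in>T. \<forall>b\<in>vec.span B. g (t + b) = g t + b" for g
  proof
    fix w
    obtain t b where tb: "t \<in> T" "b \<in> vec.span B" "w = t + b" using decomp by blast
    obtain n :: nat and v where t: "t = F {..<n} v" using rep[OF tb(1)] by blast
    have "g w = g t + b" using that(2) tb by blast
    also have "g t = G {..<n} v" using that(1) t unfolding F_def G_def by blast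
    also have "G {..<n} v + b = \<sigma>' w" using \<sigma>'_eq[OF tb(1,2)] \<sigma>T_eq[of "{..<n}" v] t tb(3) by simp
    finally show "g w = \<sigma>' w" .
  qed
  have add: "\<sigma>' (x + y) = \<sigma>' x + \<sigma>' y" for x y
  proof -
    obtain t1 b1 where tb1: "t1 \<in> T" "b1 \<in> vec.span B" "x = t1 + b1" using decomp by blast
    obtain t2 b2 where tb2: "t2 \<in> T" "b2 \<in> vec.span B" "y = t2 + b2" using decomp by blast
    obtain n :: nat and v where t1: "t1 = F {..<n} v" using rep[OF tb1(1)] by blast
    obtain m :: nat and u where t2: "t2 = F {..<m} u" using rep[OF tb2(1)] by blast
    obtain K w where K: "finite K" "F K w = F {..<n} v + F {..<m} u" "G K w = G {..<n} v + G {..<m} u"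
      using conc[of "{..<n}" "{..<m}"] by blast
    have "x + y = F K w + (b1 + b2)" using tb1 tb2 t1 t2 K(2) by (simp add: ac_simps)
    then have "\<sigma>' (x + y) = G K w + (b1 + b2)"
      using \<sigma>'_eq[OF FT vec.span_add[OF tb1(2) tb2(2)]] \<sigma>T_eq[OF K(1)] by simp
    also have "\<dots> = \<sigma>' x + \<sigma>' y"
      using K(3) \<sigma>'_eq[OF tb1(1,2)] \<sigma>'_eq[OF tb2(1,2)] \<sigma>T_eq[of "{..<n}" v] \<sigma>T_eq[of "{..<m}" u]
        tb1(3) tb2(3) t1 t2 by (simp add: ac_simps)
    finally show ?thesis .
  qed
  have zero: "\<sigma>' 0 = 0"
    using \<sigma>'F[of "{}" undefined] unfolding F_def G_def by simp
  have scale: "\<sigma>' (c *s x) = c *s \<sigma>' x" for c x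
    using bit_cases2[of c] zero by auto
  have lin: "Vector_Spaces.linear (*s) (*s) \<sigma>'"
    unfolding Vector_Spaces.linear_iff using vec.vector_space_axioms add scale by blast
  have ker: "z = 0" if "\<sigma>' z = 0" for z
  proof -
    obtain t b where tb: "t \<in> T" "b \<in> vec.span B" "z = t + b" using decomp by blast
    obtain n :: nat and v where t: "t = F {..<n} v" using rep[OF tb(1)] by blast
    have "G {..<n} v + b = 0" using that \<sigma>'_eq[OF tb(1,2)] \<sigma>T_eq[of "{..<n}" v] t tb(3) by simp
    then have e: "G {..<n} v = b" using vadd_eq0 by metis
    then have "b = 0" using GT[of "{..<n}" v] tb(2) assms(9) by auto
    then have "G {..<n} v = 0" using e by simp
    then have "F {..<n} v = 0" using LE unfolding F_def G_def by blast
    then show ?thesis using tb(3) t \<open>b = 0\<close> by simp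
  qed
  have inj: "inj \<sigma>'"
  proof (rule injI)
    fix x y assume "\<sigma>' x = \<sigma>' y"
    then have "\<sigma>' (x + y) = 0" by (simp only: add vadd_eq0)
    then show "x = y" using ker vadd_eq0 by blast
  qed
  have surj: "surj \<sigma>'"
  unfolding surj_def
  proof
    fix y
    obtain t b where tb: "t \<in> T" "b \<in> vec.span B" "y = t + b" using decomp by blast
    obtain n :: nat and u where t: "t = F {..<n} u" using rep[OF tb(1)] by blast
    have "G {..<n} (\<lambda>i. inv \<sigma> (u i)) = F {..<n} u"
      unfolding F_def G_def using assms(3) by (simp add: bij_is_surj surj_f_inv_f)
    then have "\<sigma>' (F {..<n} (\<lambda>i. inv \<sigma> (u i)) + b) = y"
      using \<sigma>'_eq[OF FT tb(2)] \<sigma>T_eq[of "{..<n}"] t tb(3) by simp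
    then show "\<exists>x. y = \<sigma>' x" by metis
  qed
  have bj: "bij \<sigma>'" using inj surj by (simp add: bij_def)
  show ?thesis
    apply (rule exI[of _ \<sigma>'])
    apply (intro conjI)
        apply (rule P1)
       apply (rule P2)
      apply (intro allI impI)
      apply (erule conjE)
      apply (erule (1) P3)
     apply (rule lin)
    apply (rule bj)
    done
qed

end
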